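(* Let $A$ be a $2\times2$ matrix of Laurent polynomials with compatible symmetry. Then there exist strongly invertible $2\times2$ matrices $P$ and $Q$ of Laurent polynomials with compatible symmetry such that $$P(z)A(z)Q(z)=\mathrm{diag}(e_1(z),e_2(z)),$$ where all multiplications are compatible and both $e_1,e_2$ have symmetry. Furthermore, if $d_1,d_2$ are the invariant polynomials of $A$, then $\{Z(e_1,z_0),Z(e_2,z_0)\}=\{Z(d_1,z_0),Z(d_2,z_0)\}$ (as multisets) for all $z_0\in\mathbb C\setminus\{0\}$.
   Context: Laurent polynomials $u(z)=\sum_ku(k)z^k$ with finitely many nonzero complex coefficients. $u$ has symmetry of type $\epsilon z^c$ if $u(z)=\epsilon z^cu(z^{-1})$; zero has every type. A type means $\pm z^m$, $m\in\mathbb Z$. An $r\times s$ matrix $P$ has compatible symmetry if there are types $\tau_1,\dots,\tau_r,\rho_1,\dots,\rho_s$ with each $P_{j,k}$ of type $\tau_j^{-1}\rho_k$. A product $P_1\cdots P_m$ is compatible if there are type vectors $\tau^{(0)},\dots,\tau^{(m)}$ with each entry $(P_i)_{j,k}$ of type $(\tau^{(i-1)}_j)^{-1}\tau^{(i)}_k$. A square matrix is strongly invertible if its determinant is a nonzero monomial. $Z(u,z_0)$ is the multiplicity of $z_0$ as a zero of $u$. Invariant polynomials: $A$ has a Smith normal form $A=E\,\mathrm{diag}(d_1,d_2)\,F$ with $E,F$ strongly invertible $2\times2$ matrices of Laurent polynomials and $d_1,d_2$ monic polynomials with nonzero constant terms (or zero) such that $d_1\mid d_2$; these $d_1,d_2$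 are the invariant polynomials of $A$. *)

theory Defs
  imports "HOL-Analysis.Analysis"
    "HOL-Computational_Algebra.Formal_Laurent_Series"
    "HOL-Computational_Algebra.Polynomial_FPS"
    "HOL-Library.Multiset"
begin

text \<open>Laurent polynomials are represented as formal Laurent series over the complex
numbers with finitely many nonzero coefficients; u(k) is written fls_nth u k.\<close>

definition laurent_poly :: "complex fls \<Rightarrow> bool" where
  "laurent_poly u \<longleftrightarrow> finite {k. fls_nth u k \<noteq> 0}"

text \<open>A symmetry type (eps, m) stands for eps z^m with eps in {1,-1}.\<close>
type_synonym sym_type = "complex \<times> int"

definition valid_type :: "sym_type \<Rightarrow> bool" where
  "valid_type t \<longleftrightarrow> fst t = 1 \<or> fst t = -1"

text \<open>u has symmetry of type eps z^c: u(z) = eps z^c u(1/z), i.e. u(k) = eps u(c-k).\<close>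
definition has_sym_type :: "complex fls \<Rightarrow> sym_type \<Rightarrow> bool" where
  "has_sym_type u t \<longleftrightarrow> (\<forall>k. fls_nth u k = fst t * fls_nth u (snd t - k))"

definition has_symmetry :: "complex fls \<Rightarrow> bool" where
  "has_symmetry u \<longleftrightarrow> (\<exists>t. valid_type t \<and> has_sym_type u t)"

definition type_quot :: "sym_type \<Rightarrow> sym_type \<Rightarrow> sym_type" where
  "type_quot tau rho = (fst tau * fst rho, snd rho - snd tau)"

type_synonym lmat = "complex fls ^ 2 ^ 2"

definition laurent_mat :: "lmat \<Rightarrow> bool" where
  "laurent_mat M \<longleftrightarrow> (\<forall>j k. laurent_poly (M $ j $ k))"

definition sym_compatible_with :: "lmat \<Rightarrow> (2 \<Rightarrow> sym_type) \<Rightarrow> (2 \<Rightarrow> sym_type) \<Rightarrow> bool" where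
  "sym_compatible_with M tau rho \<longleftrightarrow>
     (\<forall>j. valid_type (tau j)) \<and> (\<forall>k. valid_type (rho k)) \<and>
     (\<forall>j k. has_sym_type (M $ j $ k) (type_quot (tau j) (rho k)))"

definition compatible_symmetry :: "lmat \<Rightarrow> bool" where
  "compatible_symmetry M \<longleftrightarrow> (\<exists>tau rho. sym_compatible_with M tau rho)"

definition compatible_product3 :: "lmat \<Rightarrow> lmat \<Rightarrow> lmat \<Rightarrow> bool" where
  "compatible_product3 P A Q \<longleftrightarrow>
     (\<exists>t0 t1 t2 t3. sym_compatible_with P t0 t1 \<and> sym_compatible_with A t1 t2 \<and>
                    sym_compatible_with Q t2 t3)"

definition is_monomial :: "complex fls \<Rightarrow> bool" where
  "is_monomial u \<longleftrightarrow> (\<exists>c m. c \<noteq> 0 \<and> (\<forall>k. fls_nth u k = (if k = m then c else 0)))"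

definition strongly_invertible :: "lmat \<Rightarrow> bool" where
  "strongly_invertible M \<longleftrightarrow> is_monomial (det M)"

definition diag2 :: "complex fls \<Rightarrow> complex fls \<Rightarrow> lmat" where
  "diag2 a b = (\<chi> i j. if i = j then (if i = 1 then a else b) else 0)"

definition poly_to_laurent :: "complex poly \<Rightarrow> complex fls" where
  "poly_to_laurent p = fps_to_fls (fps_of_poly p)"

text \<open>For a nonzero Laurent polynomial u, the polynomial z^(-s) u(z), s the lowest exponent.\<close>
definition laurent_to_poly :: "complex fls \<Rightarrow> complex poly" where
  "laurent_to_poly u =
     Poly (map (\<lambda>n. fls_nth u (fls_subdegree u + int n))
               [0..<Suc (nat (Max {k. fls_nth u k \<noteq> 0} - fls_subdegree u))])"

definition zero_mult :: "complex fls \<Rightarrow> complex \<Rightarrow> enat" where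
  "zero_mult u z0 = (if u = 0 then \<infinity> else enat (order z0 (laurent_to_poly u)))"

definition invariant_polys :: "lmat \<Rightarrow> complex poly \<Rightarrow> complex poly \<Rightarrow> bool" where
  "invariant_polys A d1 d2 \<longleftrightarrow>
     (d1 = 0 \<or> (lead_coeff d1 = 1 \<and> poly d1 0 \<noteq> 0)) \<and>
     (d2 = 0 \<or> (lead_coeff d2 = 1 \<and> poly d2 0 \<noteq> 0)) \<and>
     d1 dvd d2 \<and>
     (\<exists>E F. laurent_mat E \<and> laurent_mat F \<and> strongly_invertible E \<and> strongly_invertible F \<and>
            A = E ** diag2 (poly_to_laurent d1) (poly_to_laurent d2) ** F)"

end

theory Submission
  imports Defs
begin

definition lmono :: "int \<Rightarrow> complex \<Rightarrow> complex fls" where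
  "lmono k a = fls_shift (-k) (fls_const a)"

lemma mono_nth[simp]: "fls_nth (lmono k a) n = (if n = k then a else 0)"
  by (simp add: lmono_def)

lemma mono_mult_nth[simp]: "fls_nth (lmono k a * u) n = a * fls_nth u (n - k)"
  by (simp add: lmono_def fls_shifted_times_simps)

lemma mult_mono_nth[simp]: "fls_nth (u * lmono k a) n = a * fls_nth u (n - k)"
  using mono_mult_nth[of k a u n] by (simp add: mult.commute)

lemma sgn_sq: "e = 1 \<or> e = -1 \<Longrightarrow> e * e = (1::complex)"
  by auto

lemma hst_iff: "has_sym_type u (e, c) \<longleftrightarrow> (\<forall>k. fls_nth u k = e * fls_nth u (c - k))"
  by (simp add: has_sym_type_def)

lemma sym_top:
  assumes "has_sym_type u (e, c)" "e = 1 \<or> e = -1" "fls_nth u k \<noteq> 0"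
  shows "k \<le> c - fls_subdegree u" "fls_subdegree u \<le> k"
proof -
  have "fls_nth u k = e * fls_nth u (c - k)" using assms(1) unfolding hst_iff by blast
  then have "fls_nth u (c - k) \<noteq> 0" using assms(3) by auto
  then have "fls_subdegree u \<le> c - k" by (rule fls_subdegree_leI)
  then show "k \<le> c - fls_subdegree u" by simp
  show "fls_subdegree u \<le> k" using assms(3) by (rule fls_subdegree_leI)
qed

lemma sym_vanish:
  assumes "has_sym_type u (e, c)" "e = 1 \<or> e = -1" "k < fls_subdegree u \<or> k > c - fls_subdegree u"
  shows "fls_nth u k = 0"
  using sym_top[OF assms(1,2)] assms(3) by force

lemma conv_sym:
  assumes "has_sym_type f (e, c)" "e = 1 \<or> e = -1"
  shows "fls_nth (f * g) n = (\<Sum>i=fls_subdegree f..c - fls_subdegree f. fls_nth f i * fls_nth g (n - i))"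
proof -
  let ?a = "fls_subdegree f" and ?b = "fls_subdegree g"
  let ?h = "\<lambda>i. fls_nth f i * fls_nth g (n - i)"
  have 1: "fls_nth (f * g) n = (\<Sum>i=?a..n - ?b. ?h i)" by (rule fls_times_nth(2))
  let ?I = "{?a..min (c - ?a) (n - ?b)}"
  have "(\<Sum>i=?a..n - ?b. ?h i) = sum ?h ?I"
  proof (rule sum.mono_neutral_right)
    show "\<forall>i\<in>{?a..n - ?b} - ?I. ?h i = 0"
    proof
      fix i assume "i \<in> {?a..n - ?b} - ?I"
      then have "i > c - ?a" by auto
      then have "fls_nth f i = 0" using sym_vanish[OF assms] by blast
      then show "?h i = 0" by simp
    qed
  qed auto
  moreover have "(\<Sum>i=?a..c - ?a. ?h i) = sum ?h ?I"
    by (rule sum.mono_neutral_right) auto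
  ultimately show ?thesis using 1 by simp
qed

lemma sym_mult:
  assumes "has_sym_type f (e, c)" "e = 1 \<or> e = -1"
    and "has_sym_type g (d, c')" "d = 1 \<or> d = -1"
  shows "has_sym_type (f * g) (e * d, c + c')"
proof -
  let ?a = "fls_subdegree f"
  have key: "fls_nth (f * g) (c + c' - n) = e * d * fls_nth (f * g) n" for n
  proof -
    have "fls_nth (f * g) (c + c' - n) = (\<Sum>i=?a..c - ?a. fls_nth f i * fls_nth g (c + c' - n - i))"
      by (rule conv_sym[OF assms(1,2)])
    also have "\<dots> = (\<Sum>i=?a..c - ?a. e * d * (fls_nth f (c - i) * fls_nth g (n - (c - i))))"
    proof (rule sum.cong)
      fix i
      have hf: "\<forall>k. fls_nth f k = e * fls_nth f (c - k)" using assms(1) unfolding hst_iff .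
      have hg: "\<forall>k. fls_nth g k = d * fls_nth g (c' - k)" using assms(3) unfolding hst_iff .
      have A: "fls_nth f i = e * fls_nth f (c - i)" using hf by blast
      have B: "fls_nth g (c + c' - n - i) = d * fls_nth g (c' - (c + c' - n - i))" using hg by blast
      have C: "c' - (c + c' - n - i) = n - (c - i)" by simp
      show "fls_nth f i * fls_nth g (c + c' - n - i) = e * d * (fls_nth f (c - i) * fls_nth g (n - (c - i)))"
        unfolding A B C by (simp only: mult_ac)
    qed simp
    also have "\<dots> = e * d * (\<Sum>i=?a..c - ?a. fls_nth f (c - i) * fls_nth g (n - (c - i)))"
      by (simp add: sum_distrib_left)
    also have "(\<Sum>i=?a..c - ?a. fls_nth f (c - i) * fls_nth g (n - (c - i))) = (\<Sum>i=?a..c - ?a. fls_nth f i * fls_nth g (n - i))"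
      by (rule sum.reindex_bij_witness[of _ "\<lambda>i. c - i" "\<lambda>i. c - i"]) auto
    also have "\<dots> = fls_nth (f * g) n" by (rule conv_sym[OF assms(1,2), symmetric])
    finally show ?thesis .
  qed
  have ed: "(e * d) * (e * d) = 1" using sgn_sq[OF assms(2)] sgn_sq[OF assms(4)] by (simp add: mult_ac)
  show ?thesis unfolding hst_iff
  proof
    fix k
    have "e * d * fls_nth (f * g) (c + c' - k) = e * d * (e * d * fls_nth (f * g) k)"
      by (simp only: key)
    also have "\<dots> = ((e * d) * (e * d)) * fls_nth (f * g) k"
      by (simp only: mult.assoc)
    also have "\<dots> = fls_nth (f * g) k" by (simp only: ed mult_1_left)
    finally show "fls_nth (f * g) k = e * d * fls_nth (f * g) (c + c' - k)" by (rule sym)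
  qed
qed

lemma sym_add: assumes "has_sym_type f t" "has_sym_type g t" shows "has_sym_type (f + g) t"
  unfolding has_sym_type_def
proof
  fix k
  have "fls_nth f k = fst t * fls_nth f (snd t - k)" "fls_nth g k = fst t * fls_nth g (snd t - k)"
    using assms unfolding has_sym_type_def by blast+
  then show "fls_nth (f + g) k = fst t * fls_nth (f + g) (snd t - k)" by (simp add: distrib_left)
qed

lemma sym_diff: assumes "has_sym_type f t" "has_sym_type g t" shows "has_sym_type (f - g) t"
  unfolding has_sym_type_def
proof
  fix k
  have "fls_nth f k = fst t * fls_nth f (snd t - k)" "fls_nth g k = fst t * fls_nth g (snd t - k)"
    using assms unfolding has_sym_type_def by blast+
  then show "fls_nth (f - g) k = fst t * fls_nth (f - g) (snd t - k)" by (simp add: right_diff_distrib)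
qed

lemma sym_uminus: assumes "has_sym_type f t" shows "has_sym_type (- f) t"
  unfolding has_sym_type_def
proof
  fix k
  have "fls_nth f k = fst t * fls_nth f (snd t - k)"
    using assms unfolding has_sym_type_def by blast
  then show "fls_nth (- f) k = fst t * fls_nth (- f) (snd t - k)" by simp
qed

lemma sym_zero[simp]: "has_sym_type 0 t"
  by (auto simp: has_sym_type_def)

lemma sym_pair: "e = 1 \<or> e = -1 \<Longrightarrow> has_sym_type (lmono k a + lmono (m - k) (e * a)) (e, m)"
  by (auto simp: has_sym_type_def)

lemma sym_mono: "has_sym_type (lmono k a) (1, 2 * k)"
  by (auto simp: has_sym_type_def)

lemma sym_laurent:
  assumes "has_sym_type u (e, c)" "e = 1 \<or> e = -1"
  shows "laurent_poly u"
proof -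
  have "{k. fls_nth u k \<noteq> 0} \<subseteq> {fls_subdegree u..c - fls_subdegree u}"
    using sym_top[OF assms] by auto
  then show ?thesis unfolding laurent_poly_def by (rule finite_subset) simp
qed


definition mk2 :: "complex fls \<Rightarrow> complex fls \<Rightarrow> complex fls \<Rightarrow> complex fls \<Rightarrow> lmat" where
  "mk2 a b c d = (\<chi> i j. if i = 1 then (if j = 1 then a else b) else (if j = 1 then c else d))"

lemma two_ne: "(2::2) \<noteq> 1" by simp

lemma mk2_nth[simp]: "mk2 a b c d $ 1 $ 1 = a" "mk2 a b c d $ 1 $ 2 = b"
  "mk2 a b c d $ 2 $ 1 = c" "mk2 a b c d $ 2 $ 2 = d"
  by (simp_all add: mk2_def)

lemma mk2_eta: "A = mk2 (A$1$1) (A$1$2) (A$2$1) (A$2$2)"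
  by (simp add: vec_eq_iff mk2_def forall_2)

lemma mk2_eq_iff: "mk2 a b c d = mk2 a' b' c' d' \<longleftrightarrow> a = a' \<and> b = b' \<and> c = c' \<and> d = d'"
  by (metis mk2_nth)

lemma mk2_mult: "mk2 a b c d ** mk2 a' b' c' d' = mk2 (a*a' + b*c') (a*b' + b*d') (c*a' + d*c') (c*b' + d*d')"
  by (subst mk2_eta) (simp add: matrix_matrix_mult_def sum_2)

lemma det_mk2: "det (mk2 a b c d) = a * d - b * c"
  by (simp add: det_2)

lemma transpose_mk2: "transpose (mk2 a b c d) = mk2 a c b d"
  by (subst mk2_eta) (simp add: transpose_def)

lemma diag2_mk2: "diag2 a b = mk2 a 0 0 b"
  by (subst mk2_eta) (simp add: diag2_def)

lemma mat1_mk2: "(mat 1 :: lmat) = mk2 1 0 0 1"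
  by (subst mk2_eta) (simp add: mat_def)

lemma compat_mk2: "sym_compatible_with (mk2 a b c d) \<tau> \<rho> \<longleftrightarrow>
   valid_type (\<tau> 1) \<and> valid_type (\<tau> 2) \<and> valid_type (\<rho> 1) \<and> valid_type (\<rho> 2) \<and>
   has_sym_type a (type_quot (\<tau> 1) (\<rho> 1)) \<and> has_sym_type b (type_quot (\<tau> 1) (\<rho> 2)) \<and>
   has_sym_type c (type_quot (\<tau> 2) (\<rho> 1)) \<and> has_sym_type d (type_quot (\<tau> 2) (\<rho> 2))"
  unfolding sym_compatible_with_def forall_2 by auto

lemma valid_iff: "valid_type t \<longleftrightarrow> fst t = 1 \<or> fst t = -1"
  by (simp add: valid_type_def)

lemma tq_valid: "valid_type t \<Longrightarrow> valid_type t' \<Longrightarrow> valid_type (type_quot t t')"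
  by (auto simp: valid_type_def type_quot_def)

lemma tq_mult:
  assumes "valid_type t0" "valid_type t1" "valid_type t2"
    "has_sym_type u (type_quot t0 t1)" "has_sym_type v (type_quot t1 t2)"
  shows "has_sym_type (u * v) (type_quot t0 t2)"
proof -
  obtain e0 c0 e1 c1 e2 c2 where t: "t0 = (e0, c0)" "t1 = (e1, c1)" "t2 = (e2, c2)"
    by (cases t0, cases t1, cases t2) auto
  have s: "e0 = 1 \<or> e0 = -1" "e1 = 1 \<or> e1 = -1" "e2 = 1 \<or> e2 = -1"
    using assms(1-3) t by (auto simp: valid_type_def)
  have "has_sym_type (u * v) (e0 * e1 * (e1 * e2), c1 - c0 + (c2 - c1))"
    apply (rule sym_mult)
    using assms(4,5) s t by (auto simp: type_quot_def)
  moreover have "e0 * e1 * (e1 * e2) = e0 * e2" using sgn_sq[OF s(2)]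
    by (metis mult.assoc mult.left_commute mult_1_right)
  ultimately show ?thesis using t by (simp add: type_quot_def)
qed

lemma compat_mult:
  assumes "sym_compatible_with X t0 t1" "sym_compatible_with Y t1 t2"
  shows "sym_compatible_with (X ** Y) t0 t2"
  unfolding sym_compatible_with_def
proof (intro conjI allI)
  fix j k
  have v: "\<And>i. valid_type (t0 i)" "\<And>i. valid_type (t1 i)" "\<And>i. valid_type (t2 i)"
    using assms by (auto simp: sym_compatible_with_def)
  have h: "\<And>i. has_sym_type (X $ j $ i * Y $ i $ k) (type_quot (t0 j) (t2 k))"
    using assms v by (intro tq_mult) (auto simp: sym_compatible_with_def)
  show "has_sym_type ((X ** Y) $ j $ k) (type_quot (t0 j) (t2 k))"
    by (simp add: matrix_matrix_mult_def sum_2 sym_add h)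
qed (use assms in \<open>auto simp: sym_compatible_with_def\<close>)

lemma compat_laurent:
  assumes "sym_compatible_with M \<tau> \<rho>" shows "laurent_mat M"
  unfolding laurent_mat_def
proof (intro allI)
  fix j k
  have "has_sym_type (M $ j $ k) (type_quot (\<tau> j) (\<rho> k))" "valid_type (type_quot (\<tau> j) (\<rho> k))"
    using assms tq_valid by (auto simp: sym_compatible_with_def)
  then show "laurent_poly (M $ j $ k)"
    by (cases "type_quot (\<tau> j) (\<rho> k)") (auto intro: sym_laurent simp: valid_type_def)
qed

lemma mono_mult_mono: "lmono i a * lmono j b = lmono (i + j) (a * b)"
  by (auto simp: fls_eq_iff)

lemma is_monomial_iff: "is_monomial u \<longleftrightarrow> (\<exists>c m. c \<noteq> 0 \<and> u = lmono m c)"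
  unfolding is_monomial_def by (auto simp: fls_eq_iff)

lemma monomial_mult: "is_monomial u \<Longrightarrow> is_monomial v \<Longrightarrow> is_monomial (u * v)"
  unfolding is_monomial_iff by (metis mono_mult_mono mult_eq_0_iff)

lemma monomial_mono: "c \<noteq> 0 \<Longrightarrow> is_monomial (lmono m c)"
  unfolding is_monomial_iff by auto

definition good :: "lmat \<Rightarrow> (2 \<Rightarrow> sym_type) \<Rightarrow> (2 \<Rightarrow> sym_type) \<Rightarrow> bool" where
  "good P t0 t1 \<longleftrightarrow> sym_compatible_with P t0 t1 \<and> strongly_invertible P"

lemma good_mult: "good P t0 t1 \<Longrightarrow> good Q t1 t2 \<Longrightarrow> good (P ** Q) t0 t2"
  unfolding good_def strongly_invertible_def
  by (auto simp: det_mul intro: compat_mult monomial_mult)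

lemma one_mono: "(1::complex fls) = lmono 0 1"
  by (auto simp: fls_eq_iff)

lemma sym_one: "has_sym_type 1 (1, 0)"
  using sym_mono[of 0 1] by (simp add: one_mono)

lemma good_id: "(\<forall>i. valid_type (t i)) \<Longrightarrow> good (mat 1) t t"
proof -
  assume v: "\<forall>i. valid_type (t i)"
  have tt: "type_quot (t i) (t i) = (1, 0)" for i
  proof -
    have "fst (t i) = 1 \<or> fst (t i) = -1" using v by (simp add: valid_type_def)
    then show ?thesis by (auto simp: type_quot_def)
  qed
  show ?thesis
    unfolding good_def strongly_invertible_def mat1_mk2 det_mk2 compat_mk2
    using v by (simp add: tt sym_one monomial_mono[of 1 0, folded one_mono])
qed

definition reach :: "lmat \<Rightarrow> (2 \<Rightarrow> sym_type) \<Rightarrow> (2 \<Rightarrow> sym_type) \<Rightarrow> lmat \<Rightarrow> (2 \<Rightarrow> sym_type) \<Rightarrow> (2 \<Rightarrow> sym_type) \<Rightarrow> bool" where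
  "reach A \<tau> \<rho> B \<tau>' \<rho>' \<longleftrightarrow> (\<exists>P Q. good P \<tau>' \<tau> \<and> good Q \<rho> \<rho>' \<and> B = P ** A ** Q)"

lemma reach_refl: "sym_compatible_with A \<tau> \<rho> \<Longrightarrow> reach A \<tau> \<rho> A \<tau> \<rho>"
  unfolding reach_def
  by (rule exI[of _ "mat 1"], rule exI[of _ "mat 1"]) (auto intro!: good_id simp: sym_compatible_with_def)

lemma reach_trans: "reach A \<tau> \<rho> B \<tau>' \<rho>' \<Longrightarrow> reach B \<tau>' \<rho>' C \<tau>'' \<rho>'' \<Longrightarrow> reach A \<tau> \<rho> C \<tau>'' \<rho>''"
  unfolding reach_def
proof (elim exE conjE)
  fix P Q P' Q'
  assume *: "good P \<tau>' \<tau>" "good Q \<rho> \<rho>'" "B = P ** A ** Q" "good P' \<tau>'' \<tau>'" "good Q' \<rho>' \<rho>''" "C = P' ** B ** Q'"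
  show "\<exists>P Q. good P \<tau>'' \<tau> \<and> good Q \<rho> \<rho>'' \<and> C = P ** A ** Q"
    by (rule exI[of _ "P' ** P"], rule exI[of _ "Q ** Q'"])
       (use * in \<open>auto intro: good_mult simp: matrix_mul_assoc\<close>)
qed

lemma reach_col: "sym_compatible_with A \<tau> \<rho> \<Longrightarrow> good Q \<rho> \<rho>' \<Longrightarrow> reach A \<tau> \<rho> (A ** Q) \<tau> \<rho>'"
  unfolding reach_def
  by (rule exI[of _ "mat 1"], rule exI[of _ Q]) (auto intro!: good_id simp: sym_compatible_with_def)

definition negt :: "(2 \<Rightarrow> sym_type) \<Rightarrow> (2 \<Rightarrow> sym_type)" where
  "negt t = (\<lambda>i. (fst (t i), - snd (t i)))"

lemma negt_negt[simp]: "negt (negt t) = t"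
  by (simp add: negt_def)

lemma compat_transpose: "sym_compatible_with A \<tau> \<rho> \<Longrightarrow> sym_compatible_with (transpose A) (negt \<rho>) (negt \<tau>)"
  unfolding sym_compatible_with_def negt_def transpose_def
  by (auto simp: valid_type_def type_quot_def mult.commute)

lemma good_transpose: "good P t0 t1 \<Longrightarrow> good (transpose P) (negt t1) (negt t0)"
  unfolding good_def strongly_invertible_def by (simp add: compat_transpose det_transpose)

lemma reach_transpose: "reach A \<tau> \<rho> B \<tau>' \<rho>' \<Longrightarrow> reach (transpose A) (negt \<rho>) (negt \<tau>) (transpose B) (negt \<rho>') (negt \<tau>')"
  unfolding reach_def
proof (elim exE conjE)
  fix P Q assume *: "good P \<tau>' \<tau>" "good Q \<rho> \<rho>'" "B = P ** A ** Q"
  show "\<exists>P Q. good P (negt \<rho>') (negt \<rho>) \<and> good Q (negt \<tau>) (negt \<tau>') \<and> transpose B = P ** transpose A ** Q"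
    by (rule exI[of _ "transpose Q"], rule exI[of _ "transpose P"])
       (use * in \<open>auto intro: good_transpose simp: matrix_transpose_mul matrix_mul_assoc\<close>)
qed


definition ulen :: "complex fls \<Rightarrow> nat" where
  "ulen u = nat (Max {k. fls_nth u k \<noteq> 0} - fls_subdegree u)"

lemma ulen_sym:
  assumes h: "has_sym_type u (e, c)" and e: "e = 1 \<or> e = -1" and nz: "u \<noteq> 0"
  shows "int (ulen u) = c - 2 * fls_subdegree u" "2 * fls_subdegree u \<le> c"
proof -
  let ?s = "fls_subdegree u"
  let ?S = "{k. fls_nth u k \<noteq> 0}"
  have fin: "finite ?S" using sym_laurent[OF h e] by (simp add: laurent_poly_def)
  have u0: "fls_nth u ?s \<noteq> 0" using nz by simp
  have "fls_nth u ?s = e * fls_nth u (c - ?s)" using h unfolding hst_iff by blast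
  then have u1: "fls_nth u (c - ?s) \<noteq> 0" using u0 by auto
  have M: "Max ?S = c - ?s"
    by (rule Max_eqI[OF fin]) (use sym_top[OF h e] u1 in auto)
  have "?s \<le> c - ?s" using sym_top(1)[OF h e u0] .
  then show "2 * ?s \<le> c" by simp
  then show "int (ulen u) = c - 2 * ?s" unfolding ulen_def M by simp
qed

lemma sub_gt:
  assumes "r \<noteq> 0" "\<And>k. k \<le> p \<Longrightarrow> fls_nth r k = 0"
  shows "p < fls_subdegree r"
proof -
  have "p + 1 \<le> fls_subdegree r"
    by (rule fls_subdegree_geI[OF assms(1)]) (use assms(2) in auto)
  then show ?thesis by simp
qed

lemma red:
  assumes ha: "has_sym_type a (ea, ca)" and hb: "has_sym_type b (eb, cb)"
    and ea: "ea = 1 \<or> ea = -1" and eb: "eb = 1 \<or> eb = -1"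
    and a0: "a \<noteq> 0" and b0: "b \<noteq> 0" and le: "ulen a \<le> ulen b"
    and eq: "ulen a = ulen b \<Longrightarrow> ea = eb"
  shows "\<exists>q. has_sym_type q (ea * eb, cb - ca) \<and> (b - q * a = 0 \<or> ulen (b - q * a) < ulen b)"
proof -
  define sa where "sa = fls_subdegree a"
  define sb where "sb = fls_subdegree b"
  define k0 where "k0 = sb - sa"
  define m where "m = cb - ca"
  define \<sigma> where "\<sigma> = ea * eb"
  define \<alpha> where "\<alpha> = fls_nth b sb / fls_nth a sa"
  have la: "int (ulen a) = ca - 2 * sa" using ulen_sym[OF ha ea a0] sa_def by simp
  have lb: "int (ulen b) = cb - 2 * sb" using ulen_sym[OF hb eb b0] sb_def by simp
  have mk: "m - 2 * k0 = int (ulen b) - int (ulen a)" using la lb m_def k0_def by simp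
  have as0: "fls_nth a sa \<noteq> 0" using a0 sa_def by simp
  have \<alpha>a: "\<alpha> * fls_nth a sa = fls_nth b sb" using as0 \<alpha>_def by simp
  have av: "fls_nth a k = 0" if "k < sa" for k using that sa_def by simp
  have bv: "fls_nth b k = 0" if "k < sb" for k using that sb_def by simp
  have \<sigma>v: "\<sigma> = 1 \<or> \<sigma> = -1" using ea eb \<sigma>_def by auto
  have \<sigma>ea: "\<sigma> * ea = eb" using sgn_sq[OF ea] \<sigma>_def by (metis mult.assoc mult.commute mult_1_right)
  have main: "\<exists>q. has_sym_type q (\<sigma>, m) \<and> (\<forall>k\<le>sb. fls_nth (q * a) k = (if k = sb then fls_nth b sb else 0))"
  proof (cases "ulen a < ulen b")
    case True
    then have mk2': "m - k0 > k0" using mk by simp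
    define q where "q = lmono k0 \<alpha> + lmono (m - k0) (\<sigma> * \<alpha>)"
    have qt: "has_sym_type q (\<sigma>, m)" unfolding q_def by (rule sym_pair[OF \<sigma>v])
    have "fls_nth (q * a) k = (if k = sb then fls_nth b sb else 0)" if "k \<le> sb" for k
    proof -
      have "fls_nth (q * a) k = \<alpha> * fls_nth a (k - k0) + \<sigma> * \<alpha> * fls_nth a (k - (m - k0))"
        unfolding q_def by (simp add: distrib_right)
      moreover have "fls_nth a (k - (m - k0)) = 0" using that mk2' k0_def by (intro av) simp
      moreover have "fls_nth a (k - k0) = (if k = sb then fls_nth a sa else 0)"
        using that k0_def av by auto
      ultimately show ?thesis using \<alpha>a by simp
    qed
    then show ?thesis using qt by blast
  next
    case False
    then have eql: "ulen a = ulen b" using le by simp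
    then have "ea = eb" by (rule eq)
    then have s1: "\<sigma> = 1" using sgn_sq[OF ea] \<sigma>_def by simp
    have m2: "m = 2 * k0" using mk eql by simp
    define q where "q = lmono k0 \<alpha>"
    have qt: "has_sym_type q (\<sigma>, m)" unfolding q_def s1 m2 by (rule sym_mono)
    have "fls_nth (q * a) k = (if k = sb then fls_nth b sb else 0)" if "k \<le> sb" for k
    proof -
      have "fls_nth (q * a) k = \<alpha> * fls_nth a (k - k0)"
        unfolding q_def by simp
      moreover have "fls_nth a (k - k0) = (if k = sb then fls_nth a sa else 0)"
        using that k0_def av by auto
      ultimately show ?thesis using \<alpha>a by simp
    qed
    then show ?thesis using qt by blast
  qed
  then obtain q where qt: "has_sym_type q (\<sigma>, m)"
    and qa: "\<And>k. k \<le> sb \<Longrightarrow> fls_nth (q * a) k = (if k = sb then fls_nth b sb else 0)" by blast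
  have qat: "has_sym_type (q * a) (eb, cb)"
    using sym_mult[OF qt \<sigma>v ha ea] \<sigma>ea m_def by simp
  have rt: "has_sym_type (b - q * a) (eb, cb)" by (rule sym_diff[OF hb qat])
  have rz: "fls_nth (b - q * a) k = 0" if "k \<le> sb" for k
    using qa[OF that] bv that by (cases "k = sb") auto
  have "b - q * a = 0 \<or> ulen (b - q * a) < ulen b"
  proof (cases "b - q * a = 0")
    case False
    have "sb < fls_subdegree (b - q * a)" by (rule sub_gt[OF False rz])
    moreover have "int (ulen (b - q * a)) = cb - 2 * fls_subdegree (b - q * a)"
      using ulen_sym[OF rt eb False] by simp
    ultimately show ?thesis using lb by simp
  qed simp
  then show ?thesis using qt \<sigma>_def m_def by blast
qed

lemma rot:
  assumes ha: "has_sym_type a (e, c)" and hb: "has_sym_type b (- e, c)"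
    and ev: "e = 1 \<or> e = -1" and a0: "a \<noteq> 0" and b0: "b \<noteq> 0"
    and sub: "fls_subdegree a = fls_subdegree b"
  defines "\<beta> \<equiv> - fls_nth a (fls_subdegree a) / fls_nth b (fls_subdegree b)"
  defines "a' \<equiv> a * (lmono 0 1 + lmono 1 1) + b * (lmono 0 \<beta> + lmono 1 (- \<beta>))"
  defines "b' \<equiv> a * (lmono 0 1 + lmono 1 (- 1)) + b * (lmono 0 \<beta> + lmono 1 \<beta>)"
  shows "a' = 0 \<or> ulen a' < ulen a" "b' = 0 \<or> ulen b' < ulen a" "a' \<noteq> 0 \<or> b' \<noteq> 0"
proof -
  define p where "p = fls_subdegree a"
  have bs0: "fls_nth b p \<noteq> 0" using b0 sub p_def by simp
  have \<beta>b: "\<beta> * fls_nth b p = - fls_nth a p" using bs0 \<beta>_def sub p_def by simp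
  have av: "fls_nth a k = 0" if "k < p" for k using that p_def by simp
  have bv: "fls_nth b k = 0" if "k < p" for k using that sub p_def by simp
  have a'n: "fls_nth a' k = fls_nth a k + fls_nth a (k - 1) + \<beta> * fls_nth b k - \<beta> * fls_nth b (k - 1)" for k
    unfolding a'_def by (simp add: distrib_left)
  have b'n: "fls_nth b' k = fls_nth a k - fls_nth a (k - 1) + \<beta> * fls_nth b k + \<beta> * fls_nth b (k - 1)" for k
    unfolding b'_def by (simp add: distrib_left)
  have a'z: "fls_nth a' k = 0" if "k \<le> p" for k
  proof (cases "k = p")
    case True then show ?thesis using a'n[of k] av[of "k-1"] bv[of "k-1"] \<beta>b by simp
  next
    case False then show ?thesis using a'n[of k] av[of "k-1"] bv[of "k-1"] av[of k] bv[of k] that by simp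
  qed
  have b'z: "fls_nth b' k = 0" if "k \<le> p" for k
  proof (cases "k = p")
    case True then show ?thesis using b'n[of k] av[of "k-1"] bv[of "k-1"] \<beta>b by simp
  next
    case False then show ?thesis using b'n[of k] av[of "k-1"] bv[of "k-1"] av[of k] bv[of k] that by simp
  qed
  have la: "int (ulen a) = c - 2 * p" using ulen_sym[OF ha ev a0] p_def by simp
  have t1: "has_sym_type (lmono 0 1 + lmono 1 1) (1, 1)" using sym_pair[of 1 0 1 1] by simp
  have t2: "has_sym_type (lmono 0 \<beta> + lmono 1 (- \<beta>)) (-1, 1)" using sym_pair[of "-1" 0 \<beta> 1] by simp
  have t3: "has_sym_type (lmono 0 1 + lmono 1 (-1)) (-1, 1)" using sym_pair[of "-1" 0 1 1] by simp
  have t4: "has_sym_type (lmono 0 \<beta> + lmono 1 \<beta>) (1, 1)" using sym_pair[of 1 0 \<beta> 1] by simp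
  have ev': "- e = 1 \<or> - e = -1" using ev by auto
  have x1: "has_sym_type (a * (lmono 0 1 + lmono 1 1)) (e, c + 1)" using sym_mult[OF ha ev t1] by simp
  have x2: "has_sym_type (b * (lmono 0 \<beta> + lmono 1 (- \<beta>))) (e, c + 1)" using sym_mult[OF hb ev' t2] by simp
  have x3: "has_sym_type (a * (lmono 0 1 + lmono 1 (-1))) (- e, c + 1)" using sym_mult[OF ha ev t3] by simp
  have x4: "has_sym_type (b * (lmono 0 \<beta> + lmono 1 \<beta>)) (- e, c + 1)" using sym_mult[OF hb ev' t4] by simp
  have a't: "has_sym_type a' (e, c + 1)" unfolding a'_def by (rule sym_add[OF x1 x2])
  have b't: "has_sym_type b' (- e, c + 1)" unfolding b'_def by (rule sym_add[OF x3 x4])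
  show "a' = 0 \<or> ulen a' < ulen a"
  proof (cases "a' = 0")
    case False
    have "p < fls_subdegree a'" by (rule sub_gt[OF False a'z])
    moreover have "int (ulen a') = c + 1 - 2 * fls_subdegree a'" using ulen_sym[OF a't ev False] by simp
    ultimately show ?thesis using la by simp
  qed simp
  show "b' = 0 \<or> ulen b' < ulen a"
  proof (cases "b' = 0")
    case False
    have "p < fls_subdegree b'" by (rule sub_gt[OF False b'z])
    moreover have "int (ulen b') = c + 1 - 2 * fls_subdegree b'" using ulen_sym[OF b't ev' False] by simp
    ultimately show ?thesis using la by simp
  qed simp
  show "a' \<noteq> 0 \<or> b' \<noteq> 0"
  proof (rule ccontr)
    assume "\<not> (a' \<noteq> 0 \<or> b' \<noteq> 0)"
    then have z: "a' = 0" "b' = 0" by auto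
    have "fls_nth a j = 0" for j
    proof -
      have e1: "fls_nth a j + fls_nth a (j - 1) + \<beta> * fls_nth b j - \<beta> * fls_nth b (j - 1) = 0"
        using a'n[of j] z by simp
      have e2: "fls_nth a j - fls_nth a (j - 1) + \<beta> * fls_nth b j + \<beta> * fls_nth b (j - 1) = 0"
        using b'n[of j] z by simp
      have e3: "fls_nth a (j + 1) + fls_nth a j + \<beta> * fls_nth b (j + 1) - \<beta> * fls_nth b j = 0"
        using a'n[of "j + 1"] z by simp
      have e4: "fls_nth a (j + 1) - fls_nth a j + \<beta> * fls_nth b (j + 1) + \<beta> * fls_nth b j = 0"
        using b'n[of "j + 1"] z by simp
      have "4 * fls_nth a j =
        (fls_nth a j + fls_nth a (j - 1) + \<beta> * fls_nth b j - \<beta> * fls_nth b (j - 1)) +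
        (fls_nth a j - fls_nth a (j - 1) + \<beta> * fls_nth b j + \<beta> * fls_nth b (j - 1)) +
        (fls_nth a (j + 1) + fls_nth a j + \<beta> * fls_nth b (j + 1) - \<beta> * fls_nth b j) -
        (fls_nth a (j + 1) - fls_nth a j + \<beta> * fls_nth b (j + 1) + \<beta> * fls_nth b j)"
        by (simp add: algebra_simps)
      also have "\<dots> = 0" unfolding e1 e2 e3 e4 by simp
      finally show ?thesis by simp
    qed
    then have "a = 0" by (simp add: fls_eq_iff)
    then show False using a0 by simp
  qed
qed


lemma tq_self: "valid_type t \<Longrightarrow> type_quot t t = (1, 0)"
  by (auto simp: valid_type_def type_quot_def)

lemma monomial_minus1: "is_monomial (-1)"
proof -
  have "(-1 :: complex fls) = lmono 0 (-1)" by (auto simp: fls_eq_iff)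
  then show ?thesis using monomial_mono[of "-1" 0] by simp
qed

lemma monomial_1: "is_monomial 1"
  using monomial_mono[of 1 0] by (simp add: one_mono)

lemma compat_valid:
  assumes "sym_compatible_with A \<tau> \<rho>"
  shows "valid_type (\<tau> i)" "valid_type (\<rho> i)"
  using assms by (auto simp: sym_compatible_with_def)

lemma colswap:
  assumes "sym_compatible_with (mk2 a b c d) \<tau> \<rho>"
  shows "reach (mk2 a b c d) \<tau> \<rho> (mk2 b a d c) \<tau> (\<lambda>i. if i = 1 then \<rho> 2 else \<rho> 1)"
proof -
  let ?Q = "mk2 0 1 1 0"
  have v: "valid_type (\<rho> 1)" "valid_type (\<rho> 2)" using compat_valid[OF assms] by auto
  have "good ?Q \<rho> (\<lambda>i. if i = 1 then \<rho> 2 else \<rho> 1)"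
    unfolding good_def strongly_invertible_def compat_mk2 det_mk2
    using v by (simp add: tq_self sym_one monomial_minus1)
  moreover have "mk2 a b c d ** ?Q = mk2 b a d c" by (simp add: mk2_mult)
  ultimately show ?thesis using reach_col[OF assms] by metis
qed

lemma colred:
  assumes "sym_compatible_with (mk2 a b c d) \<tau> \<rho>" "has_sym_type q (type_quot (\<rho> 1) (\<rho> 2))"
  shows "reach (mk2 a b c d) \<tau> \<rho> (mk2 a (b - q * a) c (d - q * c)) \<tau> \<rho>"
proof -
  let ?Q = "mk2 1 (- q) 0 1"
  have v: "valid_type (\<rho> 1)" "valid_type (\<rho> 2)" using compat_valid[OF assms(1)] by auto
  have "good ?Q \<rho> \<rho>"
    unfolding good_def strongly_invertible_def compat_mk2 det_mk2
    using v by (simp add: tq_self sym_one monomial_1 sym_uminus[OF assms(2)])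
  moreover have "mk2 a b c d ** ?Q = mk2 a (b - q * a) c (d - q * c)" by (simp add: mk2_mult algebra_simps)
  ultimately show ?thesis using reach_col[OF assms(1)] by metis
qed

lemma mult_mono1: "u * lmono k 1 = fls_shift (- k) u"
  by (simp add: fls_eq_iff)

lemma colshift:
  assumes "sym_compatible_with (mk2 a b c d) \<tau> \<rho>"
  shows "reach (mk2 a b c d) \<tau> \<rho> (mk2 a (b * lmono k 1) c (d * lmono k 1)) \<tau>
           (\<lambda>i. if i = 1 then \<rho> 1 else (fst (\<rho> 2), snd (\<rho> 2) + 2 * k))"
proof -
  let ?Q = "mk2 1 0 0 (lmono k 1)"
  have v: "valid_type (\<rho> 1)" "valid_type (\<rho> 2)" using compat_valid[OF assms(1)] by auto
  have t2: "type_quot (\<rho> 2) (fst (\<rho> 2), snd (\<rho> 2) + 2 * k) = (1, 2 * k)"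
    using v by (auto simp: valid_type_def type_quot_def)
  have v2: "valid_type (fst (\<rho> 2), snd (\<rho> 2) + 2 * k)" using v by (simp add: valid_type_def)
  have "good ?Q \<rho> (\<lambda>i. if i = 1 then \<rho> 1 else (fst (\<rho> 2), snd (\<rho> 2) + 2 * k))"
    unfolding good_def strongly_invertible_def compat_mk2 det_mk2
    using v v2 by (simp add: tq_self sym_one t2 sym_mono monomial_mono)
  moreover have "mk2 a b c d ** ?Q = mk2 a (b * lmono k 1) c (d * lmono k 1)" by (simp add: mk2_mult)
  ultimately show ?thesis using reach_col[OF assms(1)] by metis
qed

definition rotm :: "complex \<Rightarrow> lmat" where
  "rotm \<beta> = mk2 (lmono 0 1 + lmono 1 1) (lmono 0 1 + lmono 1 (- 1)) (lmono 0 \<beta> + lmono 1 (- \<beta>)) (lmono 0 \<beta> + lmono 1 \<beta>)"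

lemma det_rotm: "det (rotm \<beta>) = lmono 1 (4 * \<beta>)"
  unfolding rotm_def det_mk2 by (simp add: fls_eq_iff distrib_right distrib_left)

lemma colrot:
  assumes "sym_compatible_with (mk2 a b c d) \<tau> \<rho>" "fst (\<rho> 1) * fst (\<rho> 2) = -1" "snd (\<rho> 1) = snd (\<rho> 2)"
    and "\<beta> \<noteq> 0"
  shows "reach (mk2 a b c d) \<tau> \<rho> (mk2 a b c d ** rotm \<beta>) \<tau>
           (\<lambda>i. if i = 1 then (fst (\<rho> 1), snd (\<rho> 1) + 1) else (fst (\<rho> 2), snd (\<rho> 1) + 1))"
proof -
  have v: "valid_type (\<rho> 1)" "valid_type (\<rho> 2)" using compat_valid[OF assms(1)] by auto
  have f: "fst (\<rho> 1) * fst (\<rho> 1) = 1" "fst (\<rho> 2) * fst (\<rho> 2) = 1" "fst (\<rho> 2) * fst (\<rho> 1) = -1"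
    using v assms(2) by (auto simp: valid_type_def mult.commute)
  have t1: "has_sym_type (lmono 0 1 + lmono 1 1) (1, 1)" using sym_pair[of 1 0 1 1] by simp
  have t2: "has_sym_type (lmono 0 \<beta> + lmono 1 (- \<beta>)) (-1, 1)" using sym_pair[of "-1" 0 \<beta> 1] by simp
  have t3: "has_sym_type (lmono 0 1 + lmono 1 (-1)) (-1, 1)" using sym_pair[of "-1" 0 1 1] by simp
  have t4: "has_sym_type (lmono 0 \<beta> + lmono 1 \<beta>) (1, 1)" using sym_pair[of 1 0 \<beta> 1] by simp
  have "good (rotm \<beta>) \<rho> (\<lambda>i. if i = 1 then (fst (\<rho> 1), snd (\<rho> 1) + 1) else (fst (\<rho> 2), snd (\<rho> 1) + 1))"
    unfolding good_def strongly_invertible_def rotm_def compat_mk2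
    using v f assms(3,4) t1 t2 t3 t4
    by (simp add: valid_type_def type_quot_def det_rotm[unfolded rotm_def] monomial_mono assms(2))
  then show ?thesis using reach_col[OF assms(1)] by metis
qed

lemma rotm_mult: "mk2 a b c d ** rotm \<beta> =
  mk2 (a * (lmono 0 1 + lmono 1 1) + b * (lmono 0 \<beta> + lmono 1 (- \<beta>)))
      (a * (lmono 0 1 + lmono 1 (- 1)) + b * (lmono 0 \<beta> + lmono 1 \<beta>))
      (c * (lmono 0 1 + lmono 1 1) + d * (lmono 0 \<beta> + lmono 1 (- \<beta>)))
      (c * (lmono 0 1 + lmono 1 (- 1)) + d * (lmono 0 \<beta> + lmono 1 \<beta>))"
  unfolding rotm_def mk2_mult by simp

lemma rowswap:
  assumes "sym_compatible_with (mk2 a b c d) \<tau> \<rho>"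
  shows "\<exists>\<tau>'. reach (mk2 a b c d) \<tau> \<rho> (mk2 c d a b) \<tau>' \<rho>"
proof -
  have "sym_compatible_with (mk2 a c b d) (negt \<rho>) (negt \<tau>)"
    using compat_transpose[OF assms] by (simp add: transpose_mk2)
  from colswap[OF this] have "reach (mk2 a c b d) (negt \<rho>) (negt \<tau>) (mk2 c a d b) (negt \<rho>)
     (\<lambda>i. if i = 1 then negt \<tau> 2 else negt \<tau> 1)" .
  from reach_transpose[OF this] show ?thesis by (auto simp: transpose_mk2)
qed

lemma reach_compat:
  assumes "reach A \<tau> \<rho> B \<tau>' \<rho>'" "sym_compatible_with A \<tau> \<rho>"
  shows "sym_compatible_with B \<tau>' \<rho>'"
  using assms unfolding reach_def good_def by (auto intro!: compat_mult)


definition nrm :: "lmat \<Rightarrow> bool" where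
  "nrm A \<longleftrightarrow> A$1$1 \<noteq> 0 \<and> (\<forall>j k. A$j$k \<noteq> 0 \<longrightarrow> ulen (A$1$1) \<le> ulen (A$j$k))"

lemma nrm_mk2: "nrm (mk2 a b c d) \<longleftrightarrow> a \<noteq> 0 \<and> (b \<noteq> 0 \<longrightarrow> ulen a \<le> ulen b) \<and>
   (c \<noteq> 0 \<longrightarrow> ulen a \<le> ulen c) \<and> (d \<noteq> 0 \<longrightarrow> ulen a \<le> ulen d)"
  unfolding nrm_def forall_2 by auto

definition sm :: "lmat \<Rightarrow> nat" where
  "sm A = (if A$1$2 \<noteq> 0 then ulen (A$1$2) + 1 else 0) + (if A$2$1 \<noteq> 0 then ulen (A$2$1) + 1 else 0)"

lemma normalize4:
  assumes C: "sym_compatible_with (mk2 a b c d) \<tau> \<rho>" and e: "e \<in> {a, b, c, d}" "e \<noteq> 0"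
    and m: "\<forall>x\<in>{a, b, c, d}. x \<noteq> 0 \<longrightarrow> ulen e \<le> ulen x"
  shows "\<exists>B \<tau>' \<rho>'. reach (mk2 a b c d) \<tau> \<rho> B \<tau>' \<rho>' \<and> nrm B \<and> B$1$1 = e"
proof -
  consider "e = a" | "e = b" | "e = c" | "e = d" using e by auto
  then show ?thesis
  proof cases
    case 1
    then show ?thesis using reach_refl[OF C] e m by (intro exI[of _ "mk2 a b c d"]) (auto simp: nrm_mk2)
  next
    case 2
    then show ?thesis using colswap[OF C] e m by (intro exI[of _ "mk2 b a d c"]) (auto simp: nrm_mk2)
  next
    case 3
    obtain \<tau>' where "reach (mk2 a b c d) \<tau> \<rho> (mk2 c d a b) \<tau>' \<rho>" using rowswap[OF C] by blast
    then show ?thesis using 3 e m by (intro exI[of _ "mk2 c d a b"]) (auto simp: nrm_mk2)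
  next
    case 4
    obtain \<tau>' where R1: "reach (mk2 a b c d) \<tau> \<rho> (mk2 c d a b) \<tau>' \<rho>" using rowswap[OF C] by blast
    have C1: "sym_compatible_with (mk2 c d a b) \<tau>' \<rho>" by (rule reach_compat[OF R1 C])
    have R: "reach (mk2 a b c d) \<tau> \<rho> (mk2 d c b a) \<tau>' (\<lambda>i. if i = 1 then \<rho> 2 else \<rho> 1)"
      by (rule reach_trans[OF R1 colswap[OF C1]])
    then show ?thesis using 4 e m by (intro exI[of _ "mk2 d c b a"]) (auto simp: nrm_mk2)
  qed
qed

lemma normalize:
  fixes A :: lmat
  assumes C: "sym_compatible_with A \<tau> \<rho>" and nz: "A$j$k \<noteq> 0"
  shows "\<exists>B \<tau>' \<rho>'. reach A \<tau> \<rho> B \<tau>' \<rho>' \<and> nrm B \<and> ulen (B$1$1) \<le> ulen (A$j$k)"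
proof -
  define a b c d where "a = A$1$1" "b = A$1$2" "c = A$2$1" "d = A$2$2"
  have A: "A = mk2 a b c d" unfolding a_b_c_d_def by (rule mk2_eta)
  define S where "S = {x \<in> {a, b, c, d}. x \<noteq> 0}"
  have jk: "A$j$k \<in> S" using nz exhaust_2[of j] exhaust_2[of k] unfolding S_def a_b_c_d_def by auto
  have fin: "finite S" unfolding S_def by simp
  have "Min (ulen ` S) \<in> ulen ` S" using jk fin by (intro Min_in) auto
  then obtain e where eS: "e \<in> S" and em: "ulen e = Min (ulen ` S)" by auto
  have mle: "\<forall>x\<in>{a, b, c, d}. x \<noteq> 0 \<longrightarrow> ulen e \<le> ulen x"
    using fin em unfolding S_def by auto
  have "e \<in> {a, b, c, d}" "e \<noteq> 0" using eS unfolding S_def by auto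
  from normalize4[OF C[unfolded A] this mle] obtain B :: lmat and \<tau>' \<rho>' where
    "reach (mk2 a b c d) \<tau> \<rho> B \<tau>' \<rho>'" "nrm B" "B$1$1 = e" by blast
  moreover have "ulen e \<le> ulen (A$j$k)" using mle jk unfolding S_def by auto
  ultimately show ?thesis unfolding A by auto
qed


lemma shift_sub: "b \<noteq> 0 \<Longrightarrow> fls_subdegree (b * lmono k 1) = fls_subdegree b + k"
  by (simp add: mult_mono1)

lemma shift_nz: "b \<noteq> 0 \<Longrightarrow> b * lmono k 1 \<noteq> 0"
  by (simp add: mult_mono1 fls_shift_eq0_iff)

lemma step:
  assumes C: "sym_compatible_with (mk2 a b c d) \<tau> \<rho>" and N: "nrm (mk2 a b c d)" and b0: "b \<noteq> 0"
  shows "\<exists>B :: lmat. \<exists>\<tau>' \<rho>'. reach (mk2 a b c d) \<tau> \<rho> B \<tau>' \<rho>' \<and>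
     ((nrm B \<and> ulen (B$1$1) = ulen a \<and> sm B < sm (mk2 a b c d)) \<or> (\<exists>j k. B$j$k \<noteq> 0 \<and> ulen (B$j$k) < ulen a))"
proof -
  have v: "valid_type (\<tau> 1)" "valid_type (\<rho> 1)" "valid_type (\<rho> 2)" using compat_valid[OF C] by auto
  define t1 where "t1 = fst (\<tau> 1)"
  define r1 where "r1 = fst (\<rho> 1)"
  define r2 where "r2 = fst (\<rho> 2)"
  have sv: "t1 = 1 \<or> t1 = -1" "r1 = 1 \<or> r1 = -1" "r2 = 1 \<or> r2 = -1"
    using v unfolding t1_def r1_def r2_def valid_type_def by auto
  define ea where "ea = t1 * r1"
  define eb where "eb = t1 * r2"
  define ca where "ca = snd (\<rho> 1) - snd (\<tau> 1)"
  define cb where "cb = snd (\<rho> 2) - snd (\<tau> 1)"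
  have ha: "has_sym_type a (ea, ca)" using C unfolding compat_mk2 type_quot_def ea_def ca_def t1_def r1_def by simp
  have hb: "has_sym_type b (eb, cb)" using C unfolding compat_mk2 type_quot_def eb_def cb_def t1_def r2_def by simp
  have eav: "ea = 1 \<or> ea = -1" "eb = 1 \<or> eb = -1" using sv ea_def eb_def by auto
  have a0: "a \<noteq> 0" using N by (simp add: nrm_mk2)
  have le: "ulen a \<le> ulen b" using N b0 by (simp add: nrm_mk2)
  show ?thesis
  proof (cases "ulen a < ulen b \<or> r1 = r2")
    case True
    have eq: "ea = eb" if "ulen a = ulen b" using True that ea_def eb_def by auto
    obtain q where qt: "has_sym_type q (ea * eb, cb - ca)" and qr: "b - q * a = 0 \<or> ulen (b - q * a) < ulen b"
      using red[OF ha hb eav a0 b0 le eq] by blast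
    have "ea * eb = r1 * r2" using sgn_sq[OF sv(1)] unfolding ea_def eb_def
      by (metis mult.assoc mult.left_commute mult_1_right)
    then have qt': "has_sym_type q (type_quot (\<rho> 1) (\<rho> 2))"
      using qt unfolding type_quot_def r1_def r2_def ca_def cb_def by simp
    define B where "B = mk2 a (b - q * a) c (d - q * c)"
    have R: "reach (mk2 a b c d) \<tau> \<rho> B \<tau> \<rho>" unfolding B_def by (rule colred[OF C qt'])
    show ?thesis
    proof (cases "(b - q * a \<noteq> 0 \<and> ulen (b - q * a) < ulen a) \<or> (d - q * c \<noteq> 0 \<and> ulen (d - q * c) < ulen a)")
      case True
      then have "\<exists>j k. B$j$k \<noteq> 0 \<and> ulen (B$j$k) < ulen a"
        unfolding B_def by (metis mk2_nth)
      then show ?thesis using R by blast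
    next
      case False
      have "nrm B" using False N a0 unfolding B_def nrm_mk2 by auto
      moreover have "ulen (B$1$1) = ulen a" unfolding B_def by simp
      moreover have "sm B < sm (mk2 a b c d)" using qr b0 unfolding B_def sm_def by auto
      ultimately show ?thesis using R by blast
    qed
  next
    case False
    then have eql: "ulen a = ulen b" and r21: "r2 = - r1" using le sv by auto
    define sa where "sa = fls_subdegree a"
    define sb where "sb = fls_subdegree b"
    define k where "k = sa - sb"
    have la: "int (ulen a) = ca - 2 * sa" using ulen_sym[OF ha eav(1) a0] sa_def by simp
    have lb: "int (ulen b) = cb - 2 * sb" using ulen_sym[OF hb eav(2) b0] sb_def by simp
    have ck: "ca = cb + 2 * k" using la lb eql k_def by simp
    define \<rho>1 where "\<rho>1 = (\<lambda>i::2. if i = 1 then \<rho> 1 else (fst (\<rho> 2), snd (\<rho> 2) + 2 * k))"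
    define b1 where "b1 = b * lmono k 1"
    define d1 where "d1 = d * lmono k 1"
    have R1: "reach (mk2 a b c d) \<tau> \<rho> (mk2 a b1 c d1) \<tau> \<rho>1"
      unfolding b1_def d1_def \<rho>1_def by (rule colshift[OF C])
    have C1: "sym_compatible_with (mk2 a b1 c d1) \<tau> \<rho>1" by (rule reach_compat[OF R1 C])
    have b10: "b1 \<noteq> 0" unfolding b1_def by (rule shift_nz[OF b0])
    have sb1: "fls_subdegree b1 = sa" unfolding b1_def using shift_sub[OF b0] sb_def k_def by simp
    have hb1': "has_sym_type b1 (eb * 1, cb + 2 * k)" unfolding b1_def
      by (rule sym_mult[OF hb eav(2) sym_mono]) simp
    have "eb = - ea" unfolding eb_def ea_def r21 by simp
    then have hb1: "has_sym_type b1 (- ea, ca)" using hb1' ck by simp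
    define \<beta> where "\<beta> = - fls_nth a (fls_subdegree a) / fls_nth b1 (fls_subdegree b1)"
    have \<beta>0: "\<beta> \<noteq> 0" unfolding \<beta>_def using a0 b10 by simp
    have f1: "fst (\<rho>1 1) * fst (\<rho>1 2) = -1" unfolding \<rho>1_def using r21 sv r1_def r2_def by auto
    have f2: "snd (\<rho>1 1) = snd (\<rho>1 2)" unfolding \<rho>1_def using ck ca_def cb_def by simp
    have R2: "reach (mk2 a b1 c d1) \<tau> \<rho>1 (mk2 a b1 c d1 ** rotm \<beta>) \<tau>
           (\<lambda>i. if i = 1 then (fst (\<rho>1 1), snd (\<rho>1 1) + 1) else (fst (\<rho>1 2), snd (\<rho>1 1) + 1))"
      by (rule colrot[OF C1 f1 f2 \<beta>0])
    have sub: "fls_subdegree a = fls_subdegree b1" using sb1 sa_def by simp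
    note RT = rot[OF ha hb1 eav(1) a0 b10 sub]
    define B where "B = mk2 a b1 c d1 ** rotm \<beta>"
    have B1: "B$1$1 = a * (lmono 0 1 + lmono 1 1) + b1 * (lmono 0 \<beta> + lmono 1 (- \<beta>))"
      "B$1$2 = a * (lmono 0 1 + lmono 1 (- 1)) + b1 * (lmono 0 \<beta> + lmono 1 \<beta>)"
      unfolding B_def rotm_mult by simp_all
    have "\<exists>j k. B$j$k \<noteq> 0 \<and> ulen (B$j$k) < ulen a"
      using RT unfolding B1[symmetric] \<beta>_def[symmetric] by metis
    moreover have "reach (mk2 a b c d) \<tau> \<rho> B \<tau>
           (\<lambda>i. if i = 1 then (fst (\<rho>1 1), snd (\<rho>1 1) + 1) else (fst (\<rho>1 2), snd (\<rho>1 1) + 1))"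
      unfolding B_def by (rule reach_trans[OF R1 R2])
    ultimately show ?thesis by blast
  qed
qed


lemma nrm_transpose: "nrm (transpose B) \<longleftrightarrow> nrm B"
  by (subst (1 2) mk2_eta) (auto simp: transpose_mk2 nrm_mk2)

lemma sm_transpose: "sm (transpose B) = sm B"
  by (subst (1 2) mk2_eta) (simp add: transpose_mk2 sm_def)

lemma step_t:
  assumes C: "sym_compatible_with (mk2 a b c d) \<tau> \<rho>" and N: "nrm (mk2 a b c d)" and c0: "c \<noteq> 0"
  shows "\<exists>B :: lmat. \<exists>\<tau>' \<rho>'. reach (mk2 a b c d) \<tau> \<rho> B \<tau>' \<rho>' \<and>
     ((nrm B \<and> ulen (B$1$1) = ulen a \<and> sm B < sm (mk2 a b c d)) \<or> (\<exists>j k. B$j$k \<noteq> 0 \<and> ulen (B$j$k) < ulen a))"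
proof -
  have C': "sym_compatible_with (mk2 a c b d) (negt \<rho>) (negt \<tau>)"
    using compat_transpose[OF C] by (simp add: transpose_mk2)
  have N': "nrm (mk2 a c b d)" using N by (auto simp: nrm_mk2)
  obtain B :: lmat and \<tau>' \<rho>' where R: "reach (mk2 a c b d) (negt \<rho>) (negt \<tau>) B \<tau>' \<rho>'" and
    P: "(nrm B \<and> ulen (B$1$1) = ulen a \<and> sm B < sm (mk2 a c b d)) \<or> (\<exists>j k. B$j$k \<noteq> 0 \<and> ulen (B$j$k) < ulen a)"
    using step[OF C' N' c0] by blast
  have R': "reach (mk2 a b c d) \<tau> \<rho> (transpose B) (negt \<rho>') (negt \<tau>')"
    using reach_transpose[OF R] by (simp add: transpose_mk2)
  have smeq: "sm (mk2 a c b d) = sm (mk2 a b c d)" by (simp add: sm_def)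
  have "(nrm (transpose B) \<and> ulen (transpose B$1$1) = ulen a \<and> sm (transpose B) < sm (mk2 a b c d)) \<or>
        (\<exists>j k. transpose B$j$k \<noteq> 0 \<and> ulen (transpose B$j$k) < ulen a)"
  proof -
    have tB: "\<And>j k. transpose B $ j $ k = B $ k $ j" by (simp add: transpose_def)
    show ?thesis using P unfolding nrm_transpose sm_transpose smeq tB by blast
  qed
  then show ?thesis using R' by blast
qed

lemma main_ind:
  "\<forall>(A :: lmat) \<tau> \<rho>. sym_compatible_with A \<tau> \<rho> \<longrightarrow> nrm A \<longrightarrow> ulen (A$1$1) = n \<longrightarrow> sm A = s \<longrightarrow>
     (\<exists>B \<tau>' \<rho>' e1 e2. reach A \<tau> \<rho> B \<tau>' \<rho>' \<and> B = diag2 e1 e2)"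
proof (induction n arbitrary: s rule: less_induct)
  case (less n)
  note outer = less.IH
  show ?case
  proof (induction s rule: less_induct)
    case (less s)
    note inner = less.IH
    show ?case
    proof (intro allI impI)
      fix A :: lmat and \<tau> \<rho>
      assume C: "sym_compatible_with A \<tau> \<rho>" and N: "nrm A" and L: "ulen (A$1$1) = n" and S: "sm A = s"
      define a b c d where "a = A$1$1" "b = A$1$2" "c = A$2$1" "d = A$2$2"
      have A: "A = mk2 a b c d" unfolding a_b_c_d_def by (rule mk2_eta)
      have cont: "\<exists>B \<tau>' \<rho>' e1 e2. reach A \<tau> \<rho> B \<tau>' \<rho>' \<and> B = diag2 e1 e2"
        if St: "\<exists>B :: lmat. \<exists>\<tau>' \<rho>'. reach (mk2 a b c d) \<tau> \<rho> B \<tau>' \<rho>' \<and>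
          ((nrm B \<and> ulen (B$1$1) = ulen a \<and> sm B < sm (mk2 a b c d)) \<or> (\<exists>j k. B$j$k \<noteq> 0 \<and> ulen (B$j$k) < ulen a))"
      proof -
        obtain B :: lmat and \<tau>' \<rho>' where R: "reach A \<tau> \<rho> B \<tau>' \<rho>'" and
          P: "(nrm B \<and> ulen (B$1$1) = ulen a \<and> sm B < sm (mk2 a b c d)) \<or> (\<exists>j k. B$j$k \<noteq> 0 \<and> ulen (B$j$k) < ulen a)"
          using St A by blast
        have CB: "sym_compatible_with B \<tau>' \<rho>'" by (rule reach_compat[OF R C])
        from P show ?thesis
        proof
          assume P1: "nrm B \<and> ulen (B$1$1) = ulen a \<and> sm B < sm (mk2 a b c d)"
          then have "sm B < s" using S A by simp
          then obtain D \<tau>'' \<rho>'' e1 e2 where "reach B \<tau>' \<rho>' D \<tau>'' \<rho>''" "D = diag2 e1 e2"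
            using inner[of "sm B"] CB P1 L a_b_c_d_def by blast
          then show ?thesis using reach_trans[OF R] by blast
        next
          assume "\<exists>j k. B$j$k \<noteq> 0 \<and> ulen (B$j$k) < ulen a"
          then obtain j k where jk: "B$j$k \<noteq> 0" "ulen (B$j$k) < ulen a" by blast
          obtain E :: lmat and \<tau>2 \<rho>2 where RE: "reach B \<tau>' \<rho>' E \<tau>2 \<rho>2" and NE: "nrm E"
            and LE: "ulen (E$1$1) \<le> ulen (B$j$k)"
            using normalize[OF CB jk(1)] by blast
          have CE: "sym_compatible_with E \<tau>2 \<rho>2" by (rule reach_compat[OF RE CB])
          have "ulen (E$1$1) < n" using LE jk L a_b_c_d_def by simp
          then obtain D \<tau>'' \<rho>'' e1 e2 where "reach E \<tau>2 \<rho>2 D \<tau>'' \<rho>''" "D = diag2 e1 e2"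
            using outer[of "ulen (E$1$1)" "sm E"] CE NE by blast
          then show ?thesis using reach_trans[OF reach_trans[OF R RE]] by blast
        qed
      qed
      consider "b \<noteq> 0" | "b = 0" "c \<noteq> 0" | "b = 0" "c = 0" by blast
      then show "\<exists>B \<tau>' \<rho>' e1 e2. reach A \<tau> \<rho> B \<tau>' \<rho>' \<and> B = diag2 e1 e2"
      proof cases
        case 1
        show ?thesis by (rule cont) (rule step[OF C[unfolded A] N[unfolded A] 1])
      next
        case 2
        show ?thesis by (rule cont) (rule step_t[OF C[unfolded A] N[unfolded A] 2(2)])
      next
        case 3
        have "A = diag2 a d" using A 3 by (simp add: diag2_mk2)
        then show ?thesis using reach_refl[OF C] by blast
      qed
    qed
  qed
qed

lemma diagonalize:
  fixes A :: lmat
  assumes C: "sym_compatible_with A \<tau> \<rho>"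
  shows "\<exists>B \<tau>' \<rho>' e1 e2. reach A \<tau> \<rho> B \<tau>' \<rho>' \<and> B = diag2 e1 e2"
proof (cases "\<forall>j k. A$j$k = 0")
  case True
  then have "A = diag2 0 0" by (subst mk2_eta) (simp add: diag2_mk2)
  then show ?thesis using reach_refl[OF C] by blast
next
  case False
  then obtain j k where jk: "A$j$k \<noteq> 0" by blast
  obtain E :: lmat and \<tau>2 \<rho>2 where RE: "reach A \<tau> \<rho> E \<tau>2 \<rho>2" and NE: "nrm E"
    using normalize[OF C jk] by blast
  have CE: "sym_compatible_with E \<tau>2 \<rho>2" by (rule reach_compat[OF RE C])
  obtain D \<tau>'' \<rho>'' e1 e2 where "reach E \<tau>2 \<rho>2 D \<tau>'' \<rho>''" "D = diag2 e1 e2"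
    using main_ind CE NE by blast
  then show ?thesis using reach_trans[OF RE] by blast
qed


definition PL :: "int \<Rightarrow> complex poly \<Rightarrow> complex fls" where
  "PL s p = fls_X_intpow s * poly_to_laurent p"

lemma PL_nth: "fls_nth (PL s p) n = (if s \<le> n then coeff p (nat (n - s)) else 0)"
  by (simp add: PL_def fls_X_intpow_times_conv_shift poly_to_laurent_def)

lemma PL_eq0: "PL s p = 0 \<longleftrightarrow> p = 0"
proof
  assume "PL s p = 0"
  then have "coeff p j = 0" for j using PL_nth[of s p "s + int j"] by simp
  then show "p = 0" by (simp add: poly_eq_iff)
qed (simp add: fls_eq_iff PL_nth)

lemma laurent_PL: "laurent_poly (PL s p)"
proof -
  have "{k. fls_nth (PL s p) k \<noteq> 0} \<subseteq> {s..s + int (degree p)}"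
  proof
    fix k assume "k \<in> {k. fls_nth (PL s p) k \<noteq> 0}"
    then have "s \<le> k" "coeff p (nat (k - s)) \<noteq> 0" by (auto simp: PL_nth split: if_splits)
    then have "nat (k - s) \<le> degree p" using le_degree by blast
    then show "k \<in> {s..s + int (degree p)}" using \<open>s \<le> k\<close> by simp
  qed
  then show ?thesis unfolding laurent_poly_def by (rule finite_subset) simp
qed

lemma laurent_PL_rep:
  assumes "laurent_poly u"
  shows "u = PL (fls_subdegree u) (laurent_to_poly u)"
proof -
  let ?s = "fls_subdegree u"
  let ?S = "{k. fls_nth u k \<noteq> 0}"
  let ?N = "Suc (nat (Max ?S - ?s))"
  have fin: "finite ?S" using assms by (simp add: laurent_poly_def)
  have c: "coeff (laurent_to_poly u) j = (if j < ?N then fls_nth u (?s + int j) else 0)" for j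
    unfolding laurent_to_poly_def coeff_Poly_eq
    by (cases "j < ?N") (simp_all add: nth_default_nth nth_default_beyond del: upt_Suc)
  show ?thesis
  proof (subst fls_eq_iff, intro allI)
    fix n
    show "fls_nth u n = fls_nth (PL ?s (laurent_to_poly u)) n"
    proof (cases "?s \<le> n")
      case False then show ?thesis by (simp add: PL_nth)
    next
      case True
      show ?thesis
      proof (cases "nat (n - ?s) < ?N")
        case True2: True
        then show ?thesis using True by (simp add: PL_nth c)
      next
        case False2: False
        have "fls_nth u n = 0"
        proof (rule ccontr)
          assume "fls_nth u n \<noteq> 0"
          then have "n \<le> Max ?S" using fin by (intro Max_ge) auto
          then show False using False2 True by simp
        qed
        then show ?thesis using True False2 by (simp add: PL_nth c)
      qed
    qed
  qed
qed

lemma laurent_iff: "laurent_poly u \<longleftrightarrow> (\<exists>s p. u = PL s p)"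
  using laurent_PL laurent_PL_rep by blast

lemma PL_shift: assumes "s \<le> t" shows "PL t q = PL s (monom 1 (nat (t - s)) * q)"
proof (subst fls_eq_iff, intro allI)
  fix n
  show "fls_nth (PL t q) n = fls_nth (PL s (monom 1 (nat (t - s)) * q)) n"
  proof (cases "t \<le> n")
    case True
    then have "nat (n - s) - nat (t - s) = nat (n - t)" using assms by auto
    then show ?thesis using True assms by (simp add: PL_nth coeff_monom_mult)
  next
    case False
    then show ?thesis using assms by (simp add: PL_nth coeff_monom_mult)
  qed
qed

lemma PL_add: "PL s p + PL s q = PL s (p + q)"
  by (simp add: fls_eq_iff PL_nth)

lemma PL_uminus: "- PL s p = PL s (- p)"
  by (simp add: fls_eq_iff PL_nth)

lemma PL_mult: "PL s p * PL t q = PL (s + t) (p * q)"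
proof -
  have "poly_to_laurent (p * q) = poly_to_laurent p * poly_to_laurent q"
    by (simp add: poly_to_laurent_def fps_of_poly_mult fls_times_fps_to_fls)
  moreover have "PL s p * PL t q = (fls_X_intpow s * fls_X_intpow t) * (poly_to_laurent p * poly_to_laurent q)"
    unfolding PL_def by (simp only: mult_ac)
  ultimately show ?thesis unfolding PL_def by (simp add: fls_X_intpow_times_fls_X_intpow)
qed

lemma PL_eq_order:
  assumes "PL s p = PL t q" "s \<le> t" "q \<noteq> 0" "(z0::complex) \<noteq> 0"
  shows "order z0 p = order z0 q"
proof -
  have "PL s p = PL s (monom 1 (nat (t - s)) * q)" using assms(1) PL_shift[OF assms(2)] by simp
  then have pq: "p = monom 1 (nat (t - s)) * q"
    by (simp add: fls_eq_iff PL_nth poly_eq_iff) (metis add_diff_cancel_left' nat_int le_add_same_cancel1 of_nat_0_le_iff)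
  have m0: "monom 1 (nat (t - s)) * q \<noteq> 0" using assms(3) by (simp add: monom_eq_0_iff)
  have "order z0 (monom (1::complex) (nat (t - s))) = 0"
    using assms(4) by (intro order_0I) (simp add: poly_monom)
  then show ?thesis unfolding pq order_mult[OF m0] by simp
qed

lemma zero_mult_PL:
  assumes "p \<noteq> 0" "z0 \<noteq> 0"
  shows "zero_mult (PL s p) z0 = enat (order z0 p)"
proof -
  let ?u = "PL s p"
  have u0: "?u \<noteq> 0" using assms PL_eq0 by auto
  have rep: "?u = PL (fls_subdegree ?u) (laurent_to_poly ?u)" by (rule laurent_PL_rep[OF laurent_PL])
  have q0: "laurent_to_poly ?u \<noteq> 0" using rep u0 PL_eq0 by metis
  have p0: "p \<noteq> 0" by fact
  have "order z0 p = order z0 (laurent_to_poly ?u)"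
  proof (cases "s \<le> fls_subdegree ?u")
    case True then show ?thesis using PL_eq_order[OF rep[symmetric, THEN sym] True q0 assms(2)] by simp
  next
    case False then show ?thesis using PL_eq_order[OF rep[symmetric] _ p0 assms(2)] by simp
  qed
  then show ?thesis using u0 by (simp add: zero_mult_def)
qed


lemma Z_zero[simp]: "zero_mult 0 z0 = \<infinity>"
  by (simp add: zero_mult_def)

lemma laurent_mult: "laurent_poly u \<Longrightarrow> laurent_poly v \<Longrightarrow> laurent_poly (u * v)"
  unfolding laurent_iff using PL_mult by metis

lemma PL_lower:
  assumes "m \<le> s" "(z0::complex) \<noteq> 0"
  shows "\<exists>r. PL s p = PL m r \<and> (p \<noteq> 0 \<longrightarrow> r \<noteq> 0 \<and> order z0 r = order z0 p)"
proof -
  define r where "r = monom 1 (nat (s - m)) * p"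
  have e: "PL s p = PL m r" unfolding r_def by (rule PL_shift[OF assms(1)])
  have "p \<noteq> 0 \<longrightarrow> r \<noteq> 0 \<and> order z0 r = order z0 p"
  proof
    assume p0: "p \<noteq> 0"
    have r0: "r \<noteq> 0" unfolding r_def using p0 by (simp add: monom_eq_0_iff)
    have "order z0 r = order z0 p" using PL_eq_order[OF e[symmetric] assms(1) p0 assms(2)] .
    then show "r \<noteq> 0 \<and> order z0 r = order z0 p" using r0 by simp
  qed
  then show ?thesis using e by blast
qed

lemma laurent_add: "laurent_poly u \<Longrightarrow> laurent_poly v \<Longrightarrow> laurent_poly (u + v)"
proof -
  assume "laurent_poly u" "laurent_poly v"
  then obtain s p t q where u: "u = PL s p" and v: "v = PL t q" unfolding laurent_iff by blast
  obtain r where "PL s p = PL (min s t) r" using PL_lower[of "min s t" s 1] by auto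
  moreover obtain r' where "PL t q = PL (min s t) r'" using PL_lower[of "min s t" t 1] by auto
  ultimately show ?thesis unfolding u v laurent_iff by (auto simp: PL_add)
qed

lemma laurent_uminus: "laurent_poly u \<Longrightarrow> laurent_poly (- u)"
  unfolding laurent_iff using PL_uminus by metis

lemma laurent_zero: "laurent_poly 0"
proof -
  have "PL 0 0 = 0" using PL_eq0 by blast
  then show ?thesis using laurent_PL[of 0 0] by simp
qed

lemma Z_mult:
  assumes "laurent_poly u" "laurent_poly v" "(z0::complex) \<noteq> 0"
  shows "zero_mult (u * v) z0 = zero_mult u z0 + zero_mult v z0"
proof (cases "u = 0 \<or> v = 0")
  case True then show ?thesis by auto
next
  case False
  obtain s p t q where u: "u = PL s p" and v: "v = PL t q" using assms unfolding laurent_iff by blast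
  have p0: "p \<noteq> 0" "q \<noteq> 0" using False u v PL_eq0 by auto
  then have pq: "p * q \<noteq> 0" by simp
  show ?thesis unfolding u v PL_mult using zero_mult_PL[OF pq assms(3)] zero_mult_PL[OF p0(1) assms(3)]
      zero_mult_PL[OF p0(2) assms(3)] order_mult[OF pq] by simp
qed

lemma Z_add:
  assumes "laurent_poly u" "laurent_poly v" "(z0::complex) \<noteq> 0"
  shows "min (zero_mult u z0) (zero_mult v z0) \<le> zero_mult (u + v) z0"
proof (cases "u = 0 \<or> v = 0 \<or> u + v = 0")
  case True then show ?thesis by auto
next
  case False
  obtain s p t q where u: "u = PL s p" and v: "v = PL t q" using assms unfolding laurent_iff by blast
  have p0: "p \<noteq> 0" "q \<noteq> 0" using False u v PL_eq0 by auto
  obtain r where r: "PL s p = PL (min s t) r" "r \<noteq> 0" "order z0 r = order z0 p"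
    using PL_lower[of "min s t" s z0 p] p0 assms(3) by auto
  obtain r' where r': "PL t q = PL (min s t) r'" "r' \<noteq> 0" "order z0 r' = order z0 q"
    using PL_lower[of "min s t" t z0 q] p0 assms(3) by auto
  have uv: "u + v = PL (min s t) (r + r')" unfolding u v r(1) r'(1) PL_add ..
  have rr: "r + r' \<noteq> 0" using False uv PL_eq0 by auto
  let ?n = "min (order z0 r) (order z0 r')"
  have "[:-z0, 1:] ^ ?n dvd r" using order_divides by (metis min.cobounded1)
  moreover have "[:-z0, 1:] ^ ?n dvd r'" using order_divides by (metis min.cobounded2)
  ultimately have "[:-z0, 1:] ^ ?n dvd r + r'" by simp
  then have "?n \<le> order z0 (r + r')" using rr order_divides by blast
  moreover have "zero_mult (u + v) z0 = enat (order z0 (r + r'))" unfolding uv by (rule zero_mult_PL[OF rr assms(3)])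
  moreover have "zero_mult u z0 = enat (order z0 p)" unfolding u by (rule zero_mult_PL[OF p0(1) assms(3)])
  moreover have "zero_mult v z0 = enat (order z0 q)" unfolding v by (rule zero_mult_PL[OF p0(2) assms(3)])
  ultimately show ?thesis using r(3) r'(3) by simp
qed

lemma Z_uminus:
  assumes "laurent_poly u" "(z0::complex) \<noteq> 0" shows "zero_mult (- u) z0 = zero_mult u z0"
proof (cases "u = 0")
  case False
  obtain s p where u: "u = PL s p" using assms unfolding laurent_iff by blast
  have p0: "p \<noteq> 0" using False u PL_eq0 by auto
  have "- p \<noteq> 0" using p0 by simp
  then show ?thesis unfolding u PL_uminus using zero_mult_PL[OF p0 assms(2)] zero_mult_PL[OF _ assms(2)] by simp
qed simp

lemma mono_PL: "lmono m c = PL m [:c:]"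
  by (auto simp: fls_eq_iff PL_nth coeff_pCons split: nat.splits)

lemma laurent_mono: "laurent_poly (lmono m c)"
  unfolding mono_PL by (rule laurent_PL)

lemma Z_monomial:
  assumes "is_monomial u" "(z0::complex) \<noteq> 0" shows "zero_mult u z0 = 0"
proof -
  obtain c m where c: "c \<noteq> 0" and u: "u = lmono m c" using assms(1) unfolding is_monomial_iff by blast
  have "[:c:] \<noteq> 0" using c by simp
  moreover have "order z0 [:c:] = 0" using c by (intro order_0I) simp
  ultimately show ?thesis unfolding u mono_PL using zero_mult_PL[OF _ assms(2)] by (simp add: zero_enat_def)
qed

lemma laurent_monomial: "is_monomial u \<Longrightarrow> laurent_poly u"
  unfolding is_monomial_iff using laurent_mono by blast

definition m1 :: "complex \<Rightarrow> lmat \<Rightarrow> enat" where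
  "m1 z0 A = min (min (zero_mult (A$1$1) z0) (zero_mult (A$1$2) z0)) (min (zero_mult (A$2$1) z0) (zero_mult (A$2$2) z0))"

lemma m1_le: "m1 z0 A \<le> zero_mult (A$j$k) z0"
  unfolding m1_def using exhaust_2[of j] exhaust_2[of k] by (auto simp: min.coboundedI1 min.coboundedI2)

lemma m1_geI: "(\<And>j k. x \<le> zero_mult (A$j$k) z0) \<Longrightarrow> x \<le> m1 z0 A"
  unfolding m1_def by simp

lemma entry_mult: fixes X M :: lmat shows "(X ** M)$j$k = X$j$1 * M$1$k + X$j$2 * M$2$k"
  by (simp add: matrix_matrix_mult_def sum_2)

lemma laurent_mat_mult: "laurent_mat X \<Longrightarrow> laurent_mat M \<Longrightarrow> laurent_mat (X ** M)"
  unfolding laurent_mat_def entry_mult by (auto intro!: laurent_add laurent_mult)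

lemma Z_prod_ge:
  assumes "laurent_poly x" "laurent_poly y" "(z0::complex) \<noteq> 0"
  shows "zero_mult y z0 \<le> zero_mult (x * y) z0" "zero_mult x z0 \<le> zero_mult (x * y) z0"
  unfolding Z_mult[OF assms] by (simp_all add: add_increasing add_increasing2)

lemma m1_mult_left:
  assumes "laurent_mat X" "laurent_mat M" "(z0::complex) \<noteq> 0"
  shows "m1 z0 M \<le> m1 z0 (X ** M)"
proof (rule m1_geI)
  fix j k
  have L: "\<And>j k. laurent_poly (X$j$k)" "\<And>j k. laurent_poly (M$j$k)" using assms unfolding laurent_mat_def by auto
  have "m1 z0 M \<le> zero_mult (X$j$1 * M$1$k) z0" using m1_le Z_prod_ge(1)[OF L(1) L(2) assms(3)] order_trans by blast
  moreover have "m1 z0 M \<le> zero_mult (X$j$2 * M$2$k) z0" using m1_le Z_prod_ge(1)[OF L(1) L(2) assms(3)] order_trans by blast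
  moreover have "min (zero_mult (X$j$1 * M$1$k) z0) (zero_mult (X$j$2 * M$2$k) z0) \<le> zero_mult ((X ** M)$j$k) z0"
    unfolding entry_mult by (rule Z_add[OF laurent_mult[OF L(1) L(2)] laurent_mult[OF L(1) L(2)] assms(3)])
  ultimately show "m1 z0 M \<le> zero_mult ((X ** M)$j$k) z0" by (meson min.boundedI order_trans)
qed

lemma m1_mult_right:
  assumes "laurent_mat M" "laurent_mat Y" "(z0::complex) \<noteq> 0"
  shows "m1 z0 M \<le> m1 z0 (M ** Y)"
proof (rule m1_geI)
  fix j k
  have L: "\<And>j k. laurent_poly (M$j$k)" "\<And>j k. laurent_poly (Y$j$k)" using assms unfolding laurent_mat_def by auto
  have "m1 z0 M \<le> zero_mult (M$j$1 * Y$1$k) z0" using m1_le Z_prod_ge(2)[OF L(1) L(2) assms(3)] order_trans by blast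
  moreover have "m1 z0 M \<le> zero_mult (M$j$2 * Y$2$k) z0" using m1_le Z_prod_ge(2)[OF L(1) L(2) assms(3)] order_trans by blast
  moreover have "min (zero_mult (M$j$1 * Y$1$k) z0) (zero_mult (M$j$2 * Y$2$k) z0) \<le> zero_mult ((M ** Y)$j$k) z0"
    unfolding entry_mult by (rule Z_add[OF laurent_mult[OF L(1) L(2)] laurent_mult[OF L(1) L(2)] assms(3)])
  ultimately show "m1 z0 M \<le> zero_mult ((M ** Y)$j$k) z0" by (meson min.boundedI order_trans)
qed

definition adj2 :: "lmat \<Rightarrow> lmat" where
  "adj2 X = mk2 (X$2$2) (- X$1$2) (- X$2$1) (X$1$1)"

lemma laurent_adj2: "laurent_mat X \<Longrightarrow> laurent_mat (adj2 X)"
  unfolding laurent_mat_def adj2_def forall_2 by (simp add: laurent_uminus)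

lemma adj2_left: "adj2 X ** X = mk2 (det X) 0 0 (det X)"
proof -
  obtain a b c d where X: "X = mk2 a b c d" using mk2_eta by metis
  show ?thesis by (simp add: X adj2_def mk2_mult det_mk2 algebra_simps)
qed

lemma adj2_right: "X ** adj2 X = mk2 (det X) 0 0 (det X)"
proof -
  obtain a b c d where X: "X = mk2 a b c d" using mk2_eta by metis
  show ?thesis by (simp add: X adj2_def mk2_mult det_mk2 algebra_simps)
qed

lemma laurent_det: "laurent_mat X \<Longrightarrow> laurent_poly (det X)"
  unfolding laurent_mat_def det_2 diff_conv_add_uminus by (intro laurent_add laurent_uminus laurent_mult) auto

lemma scale_mat: "mk2 p 0 0 p ** A ** mk2 q 0 0 q = mk2 (p * A$1$1 * q) (p * A$1$2 * q) (p * A$2$1 * q) (p * A$2$2 * q)"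
  by (subst mk2_eta[of A]) (simp add: mk2_mult)

lemma inv_m1:
  assumes L: "laurent_mat P" "laurent_mat A" "laurent_mat Q" and S: "strongly_invertible P" "strongly_invertible Q"
    and z: "(z0::complex) \<noteq> 0"
  shows "m1 z0 (P ** A ** Q) = m1 z0 A"
proof (rule antisym)
  have "m1 z0 A \<le> m1 z0 (P ** A)" by (rule m1_mult_left[OF L(1,2) z])
  also have "\<dots> \<le> m1 z0 (P ** A ** Q)" by (rule m1_mult_right[OF laurent_mat_mult[OF L(1,2)] L(3) z])
  finally show "m1 z0 A \<le> m1 z0 (P ** A ** Q)" .
  let ?B = "P ** A ** Q"
  have LB: "laurent_mat ?B" using L by (intro laurent_mat_mult)
  have "m1 z0 ?B \<le> m1 z0 (adj2 P ** ?B)" by (rule m1_mult_left[OF laurent_adj2[OF L(1)] LB z])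
  also have "\<dots> \<le> m1 z0 (adj2 P ** ?B ** adj2 Q)"
    by (rule m1_mult_right[OF laurent_mat_mult[OF laurent_adj2[OF L(1)] LB] laurent_adj2[OF L(3)] z])
  also have "adj2 P ** ?B ** adj2 Q = (adj2 P ** P) ** A ** (Q ** adj2 Q)" by (simp add: matrix_mul_assoc)
  also have "\<dots> = mk2 (det P) 0 0 (det P) ** A ** mk2 (det Q) 0 0 (det Q)" by (simp add: adj2_left adj2_right)
  also have "m1 z0 \<dots> = m1 z0 A"
  proof -
    have dP: "laurent_poly (det P)" "zero_mult (det P) z0 = 0"
      using S(1) z unfolding strongly_invertible_def by (auto intro: laurent_monomial Z_monomial)
    have dQ: "laurent_poly (det Q)" "zero_mult (det Q) z0 = 0"
      using S(2) z unfolding strongly_invertible_def by (auto intro: laurent_monomial Z_monomial)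
    have e: "zero_mult (det P * x * det Q) z0 = zero_mult x z0" if "laurent_poly x" for x
      using Z_mult[OF laurent_mult[OF dP(1) that] dQ(1) z] Z_mult[OF dP(1) that z] dP(2) dQ(2) by simp
    have LA: "\<And>j k. laurent_poly (A$j$k)" using L(2) unfolding laurent_mat_def by auto
    show ?thesis unfolding scale_mat m1_def by (simp add: e LA)
  qed
  finally show "m1 z0 ?B \<le> m1 z0 A" .
qed

lemma inv_det:
  assumes L: "laurent_mat P" "laurent_mat A" "laurent_mat Q" and S: "strongly_invertible P" "strongly_invertible Q"
    and z: "(z0::complex) \<noteq> 0"
  shows "zero_mult (det (P ** A ** Q)) z0 = zero_mult (det A) z0"
proof -
  have dP: "laurent_poly (det P)" "zero_mult (det P) z0 = 0"
    using S(1) z unfolding strongly_invertible_def by (auto intro: laurent_monomial Z_monomial)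
  have dQ: "laurent_poly (det Q)" "zero_mult (det Q) z0 = 0"
    using S(2) z unfolding strongly_invertible_def by (auto intro: laurent_monomial Z_monomial)
  have dA: "laurent_poly (det A)" by (rule laurent_det[OF L(2)])
  show ?thesis unfolding det_mul
    using Z_mult[OF laurent_mult[OF dP(1) dA] dQ(1) z] Z_mult[OF dP(1) dA z] dP(2) dQ(2) by simp
qed

lemma m1_diag: "m1 z0 (diag2 x y) = min (zero_mult x z0) (zero_mult y z0)"
  unfolding diag2_mk2 m1_def by simp

lemma det_diag: "det (diag2 x y) = x * y"
  unfolding diag2_mk2 det_mk2 by simp

lemma mset_enat:
  fixes x y u v :: enat
  assumes "min x y = min u v" "x + y = u + v"
  shows "{#x, y#} = {#u, v#}"
proof -
  have sw: "{#x, y#} = {#y, x#}" "{#u, v#} = {#v, u#}" by (simp_all add: add_mset_commute)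
  have key: "{#x, y#} = {#u, v#}" if "x \<le> y" "u \<le> v" "min x y = min u v" "x + y = u + v" for x y u v :: enat
  proof -
    have xu: "x = u" using that by (simp add: min_def)
    have "y = v"
    proof (cases x)
      case (enat n)
      then show ?thesis using that xu by (cases y; cases v) auto
    next
      case infinity
      then show ?thesis using that xu by auto
    qed
    then show ?thesis using xu by simp
  qed
  show ?thesis
  proof (cases "x \<le> y")
    case True
    show ?thesis
    proof (cases "u \<le> v")
      case True
      then show ?thesis using key[OF \<open>x \<le> y\<close> True assms] by simp
    next
      case False
      then show ?thesis using key[of x y v u] \<open>x \<le> y\<close> assms sw by (simp add: min.commute add.commute)
    qed
  next
    case False
    then have yx: "y \<le> x" by simp
    show ?thesis
    proof (cases "u \<le> v")
      case True
      then show ?thesis using key[of y x u v] yx assms sw by (simp add: min.commute add.commute)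
    next
      case False
      then show ?thesis using key[of y x v u] yx assms sw by (simp add: min.commute add.commute)
    qed
  qed
qed

lemma laurent_ptl: "laurent_poly (poly_to_laurent d)"
proof -
  have "poly_to_laurent d = PL 0 d" by (simp add: PL_def)
  then show ?thesis using laurent_PL by simp
qed

lemma laurent_diag: "laurent_poly x \<Longrightarrow> laurent_poly y \<Longrightarrow> laurent_mat (diag2 x y)"
  unfolding laurent_mat_def diag2_mk2 forall_2 by (simp add: laurent_zero)

lemma invariants:
  assumes L: "laurent_mat P" "laurent_mat A" "laurent_mat Q" and S: "strongly_invertible P" "strongly_invertible Q"
    and B: "P ** A ** Q = diag2 e1 e2" and I: "invariant_polys A d1 d2" and z: "(z0::complex) \<noteq> 0"
  shows "{# zero_mult e1 z0, zero_mult e2 z0 #} =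
         {# zero_mult (poly_to_laurent d1) z0, zero_mult (poly_to_laurent d2) z0 #}"
proof -
  obtain E F where LE: "laurent_mat E" "laurent_mat F" and SE: "strongly_invertible E" "strongly_invertible F"
    and A: "A = E ** diag2 (poly_to_laurent d1) (poly_to_laurent d2) ** F"
    using I unfolding invariant_polys_def by blast
  let ?D = "diag2 (poly_to_laurent d1) (poly_to_laurent d2)"
  have LD: "laurent_mat ?D" by (intro laurent_diag laurent_ptl)
  have Le: "laurent_poly e1" "laurent_poly e2"
  proof -
    have "laurent_mat (diag2 e1 e2)" unfolding B[symmetric] using L by (intro laurent_mat_mult)
    then show "laurent_poly e1" "laurent_poly e2" unfolding laurent_mat_def diag2_mk2 by (metis mk2_nth)+
  qed
  have m: "min (zero_mult e1 z0) (zero_mult e2 z0) =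
      min (zero_mult (poly_to_laurent d1) z0) (zero_mult (poly_to_laurent d2) z0)"
    using inv_m1[OF L S z] inv_m1[OF LE(1) LD LE(2) SE z] unfolding B A[symmetric] m1_diag by simp
  have s: "zero_mult e1 z0 + zero_mult e2 z0 =
      zero_mult (poly_to_laurent d1) z0 + zero_mult (poly_to_laurent d2) z0"
    using inv_det[OF L S z] inv_det[OF LE(1) LD LE(2) SE z] unfolding B A[symmetric] det_diag
    using Z_mult[OF Le z] Z_mult[OF laurent_ptl laurent_ptl z] by simp
  show ?thesis by (rule mset_enat[OF m s])
qed


theorem theorem3p13:
  fixes A :: lmat
  assumes "laurent_mat A" and "compatible_symmetry A"
  shows "\<exists>P Q e1 e2.
           laurent_mat P \<and> laurent_mat Q \<and>
           strongly_invertible P \<and> strongly_invertible Q \<and>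
           compatible_symmetry P \<and> compatible_symmetry Q \<and>
           compatible_product3 P A Q \<and>
           P ** A ** Q = diag2 e1 e2 \<and>
           has_symmetry e1 \<and> has_symmetry e2 \<and>
           (\<forall>d1 d2. invariant_polys A d1 d2 \<longrightarrow>
              (\<forall>z0::complex. z0 \<noteq> 0 \<longrightarrow>
                 {# zero_mult e1 z0, zero_mult e2 z0 #} =
                 {# zero_mult (poly_to_laurent d1) z0, zero_mult (poly_to_laurent d2) z0 #}))"
proof -
  obtain \<tau> \<rho> where C: "sym_compatible_with A \<tau> \<rho>"
    using assms(2) unfolding compatible_symmetry_def by blast
  obtain B \<tau>' \<rho>' e1 e2 where R: "reach A \<tau> \<rho> B \<tau>' \<rho>'" and BD: "B = diag2 e1 e2"
    using diagonalize[OF C] by blast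
  obtain P Q where GP: "good P \<tau>' \<tau>" and GQ: "good Q \<rho> \<rho>'" and BPQ: "B = P ** A ** Q"
    using R unfolding reach_def by blast
  have CP: "sym_compatible_with P \<tau>' \<tau>" and SP: "strongly_invertible P" using GP unfolding good_def by auto
  have CQ: "sym_compatible_with Q \<rho> \<rho>'" and SQ: "strongly_invertible Q" using GQ unfolding good_def by auto
  have LP: "laurent_mat P" by (rule compat_laurent[OF CP])
  have LQ: "laurent_mat Q" by (rule compat_laurent[OF CQ])
  have CB: "sym_compatible_with (diag2 e1 e2) \<tau>' \<rho>'" using reach_compat[OF R C] BD by simp
  then have h1: "has_sym_type e1 (type_quot (\<tau>' 1) (\<rho>' 1))" "has_sym_type e2 (type_quot (\<tau>' 2) (\<rho>' 2))"
    and v: "valid_type (\<tau>' 1)" "valid_type (\<tau>' 2)" "valid_type (\<rho>' 1)" "valid_type (\<rho>' 2)"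
    unfolding diag2_mk2 compat_mk2 by auto
  have he: "has_symmetry e1" "has_symmetry e2"
    unfolding has_symmetry_def using h1 tq_valid[OF v(1) v(3)] tq_valid[OF v(2) v(4)] by blast+
  have cs: "compatible_symmetry P" "compatible_symmetry Q"
    unfolding compatible_symmetry_def using CP CQ by blast+
  have cp: "compatible_product3 P A Q" unfolding compatible_product3_def using CP C CQ by blast
  have eq: "P ** A ** Q = diag2 e1 e2" using BPQ BD by simp
  have inv: "\<forall>d1 d2. invariant_polys A d1 d2 \<longrightarrow>
              (\<forall>z0::complex. z0 \<noteq> 0 \<longrightarrow>
                 {# zero_mult e1 z0, zero_mult e2 z0 #} =
                 {# zero_mult (poly_to_laurent d1) z0, zero_mult (poly_to_laurent d2) z0 #})"
    using invariants[OF LP assms(1) LQ SP SQ eq] by blast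
  show ?thesis using LP LQ SP SQ cs cp eq he inv by blast
qed

end
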